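(* Consider the two-route traffic model with affine routing ratios described in the context, and let $\overline{x}$ be its unique equilibrium. Define, for $i=1,2$, the effective capacities $\tilde F_i=\frac{q_i+\sqrt{q_i^2+k_i}}{2\alpha}$, where $q_1=\alpha\big(F_1(1+\tfrac{E_2}{E_1})-E_2\big)-2(1-\alpha)r_1^0E_2$, $q_2=\alpha\big(F_2(1+\tfrac{E_1}{E_2})-E_1\big)-2(1-\alpha)r_2^0E_1$, $k_1=8\alpha F_1E_2$, $k_2=8\alpha F_2E_1$. Then: (i) if $\phi\le\min\{\tilde F_1,\tilde F_2\}$, the network has no unsatisfied demand at $\overline{x}$, i.e., $\phi R_\ell(\overline{x})\le S_\ell(\overline{x}_\ell)$ for $\ell=1,2$; (ii) if $\phi>\min\{\tilde F_1,\tilde F_2\}=\tilde F_i$, then there is unsatisfied demand on route $i$ at $\overline{x}$, i.e., $\phi R_i(\overline{x})>S_i(\overline{x}_i)$.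
   Context: Two routes $i=1,2$ connect an origin to a destination, with positive parameters $B_i$ (jam density), $C_i$ (critical density), $F_i$ (capacity), $C_i<B_i$, and constant demand $\phi>0$. Set $v_i=F_i/C_i$ and $E_i=v_iB_i$. The state $x=(x_1,x_2)\in\Omega:=[0,B_1]\times[0,B_2]$ evolves by $\dot x_i=\min\{\phi R_i(x),S_i(x_i)\}-D_i(x_i)$, with $S_i(x_i)=F_i$ if $x_i<C_i$, $S_i(x_i)=\frac{F_i}{B_i-C_i}(B_i-x_i)$ otherwise; $D_i(x_i)=v_ix_i$ if $x_i<C_i$, $D_i(x_i)=F_i$ otherwise. The routing ratios are affine: with $\alpha\in(0,1]$ and constants $r_1^0,r_2^0\ge0$, $r_1^0+r_2^0=1$, $R_1(x)=(1-\alpha)r_1^0+\alpha\big(\tfrac12+\tfrac12(\tfrac{x_2}{B_2}-\tfrac{x_1}{B_1})\big)$, $R_2(x)=(1-\alpha)r_2^0+\alpha\big(\tfrac12+\tfrac12(\tfrac{x_1}{B_1}-\tfrac{x_2}{B_2})\big)$. Standing assumptions: $\phi<F_1+F_2$; $F_i>(1-\alpha)\phi r_i^0$ for $i=1,2$; $\phi<E_i$ for $i=1,2$. Under these assumptions the system has a unique equilibrium $\overline{x}\in\Omega$. Demand on route $i$ at state $x$ is called unsatisfied if $\phi R_i(x)>S_i(x_i)$. *)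

theory Defs
  imports Complex_Main
begin

text \<open>Supply (receiving) function of a route with jam density B, critical density C, capacity F.\<close>
definition supply_fn :: "real \<Rightarrow> real \<Rightarrow> real \<Rightarrow> real \<Rightarrow> real" where
  "supply_fn B C F x = (if x < C then F else F / (B - C) * (B - x))"

definition demand_fn :: "real \<Rightarrow> real \<Rightarrow> real \<Rightarrow> real \<Rightarrow> real" where
  "demand_fn B C F x = (if x < C then (F / C) * x else F)"

definition R1 :: "real \<Rightarrow> real \<Rightarrow> real \<Rightarrow> real \<Rightarrow> real \<Rightarrow> real \<Rightarrow> real" where
  "R1 \<alpha> r10 B1 B2 x1 x2 = (1 - \<alpha>) * r10 + \<alpha> * (1/2 + 1/2 * (x2 / B2 - x1 / B1))"

definition R2 :: "real \<Rightarrow> real \<Rightarrow> real \<Rightarrow> real \<Rightarrow> real \<Rightarrow> real \<Rightarrow> real" where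
  "R2 \<alpha> r20 B1 B2 x1 x2 = (1 - \<alpha>) * r20 + \<alpha> * (1/2 + 1/2 * (x1 / B1 - x2 / B2))"

definition eff_cap :: "real \<Rightarrow> real \<Rightarrow> real \<Rightarrow> real" where
  "eff_cap \<alpha> q k = (q + sqrt (q\<^sup>2 + k)) / (2 * \<alpha>)"

end

theory Submission
  imports Defs
begin

lemma G0:
  fixes w E2 F1 \<phi> \<alpha> r10 y1 y2 :: real
  shows "\<alpha> * \<phi>^2 - (\<alpha> * (F1 * (1 + w) - E2) - 2 * (1 - \<alpha>) * r10 * E2) * \<phi> - 2*F1*E2
   = 2*E2*(\<phi> * ((1 - \<alpha>) * r10 + \<alpha> * (1/2 + 1/2 * (y2 - y1))) - F1) + \<alpha>*\<phi>*(\<phi> - F1 - E2*y2) + \<alpha>*\<phi>*(E2*y1 - F1*w)"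
  by (simp add: field_simps power2_eq_square)

lemma neg3:
  fixes p q r a b c :: real
  assumes "p > 0" "q > 0" "r > 0" "a < 0" "b < 0" "c < 0"
  shows "p*a + q*b + r*c < 0"
proof -
  have "p*a < 0" "q*b < 0" "r*c < 0" using assms by (simp_all add: mult_pos_neg)
  then show ?thesis by linarith
qed

lemma eqcase:
  fixes B C F x p :: real
  assumes "C > 0" "C < B" "F > 0"
    and e: "min p (supply_fn B C F x) - demand_fn B C F x = 0"
  shows "supply_fn B C F x = F \<and> ((x < C \<and> p = F/C*x \<and> p < F) \<or> (x = C \<and> p \<ge> F \<and> F/C*x = F))"
proof (cases "x < C")
  case True
  have "F/C*x < F/C*C" using True assms by (intro mult_strict_left_mono) auto
  then have d: "F/C*x < F" using assms by simp
  have s: "supply_fn B C F x = F" using True by (simp add: supply_fn_def)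
  have "demand_fn B C F x = F/C*x" using True by (simp add: demand_fn_def)
  then have "min p F = F/C*x" using e s by simp
  then have "p = F/C*x" using d by (simp add: min_def split: if_splits)
  then show ?thesis using s d True by simp
next
  case False
  have dm: "demand_fn B C F x = F" using False by (simp add: demand_fn_def)
  have sp: "supply_fn B C F x = F/(B-C)*(B-x)" using False by (simp add: supply_fn_def)
  have "F/(B-C)*(B-x) \<le> F/(B-C)*(B-C)" using False assms
    by (intro mult_left_mono) auto
  then have le: "F/(B-C)*(B-x) \<le> F" using assms by simp
  have "min p (F/(B-C)*(B-x)) = F" using e dm sp by simp
  then have ge: "F/(B-C)*(B-x) \<ge> F" and pF: "p \<ge> F" by (simp_all add: min_def split: if_splits)
  then have "F/(B-C)*(B-x) = F" using le by simp
  then have "B - x = B - C" using assms by (simp add: field_simps)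
  then have xc: "x = C" by simp
  show ?thesis using xc pF assms by (simp add: supply_fn_def)
qed

lemma sign_lemma:
  fixes \<alpha> q k \<phi> :: real
  assumes "\<alpha> > 0" "k > 0" "\<phi> > 0"
  shows "\<phi> \<le> eff_cap \<alpha> q k \<longleftrightarrow> \<alpha>*\<phi>^2 - q*\<phi> - k/(4*\<alpha>) \<le> 0"
proof -
  have "\<phi> \<le> eff_cap \<alpha> q k \<longleftrightarrow> 2*\<alpha>*\<phi> - q \<le> sqrt (q^2+k)"
    using assms unfolding eff_cap_def by (simp add: pos_le_divide_eq algebra_simps)
  also have "\<dots> \<longleftrightarrow> \<alpha>*\<phi>^2 - q*\<phi> - k/(4*\<alpha>) \<le> 0"
  proof (cases "2*\<alpha>*\<phi> - q \<le> 0")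
    case True
    have "\<alpha>*\<phi> - q \<le> 0" using True assms mult_pos_pos[of \<alpha> \<phi>] by linarith
    then have "\<phi>*(\<alpha>*\<phi> - q) \<le> 0" using assms by (simp add: mult_nonneg_nonpos)
    moreover have "\<phi>*(\<alpha>*\<phi> - q) = \<alpha>*\<phi>^2 - q*\<phi>" by (simp add: algebra_simps power2_eq_square)
    moreover have "k/(4*\<alpha>) > 0" using assms by simp
    ultimately have "\<alpha>*\<phi>^2 - q*\<phi> - k/(4*\<alpha>) \<le> 0" using assms by linarith
    moreover have "0 \<le> sqrt (q^2+k)" using assms by simp
    ultimately show ?thesis using True by linarith
  next
    case False
    have "2*\<alpha>*\<phi> - q \<le> sqrt (q^2+k) \<longleftrightarrow> (2*\<alpha>*\<phi> - q)^2 \<le> q^2 + k"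
    proof
      assume h: "2*\<alpha>*\<phi> - q \<le> sqrt (q^2+k)"
      have "(2*\<alpha>*\<phi> - q)^2 \<le> (sqrt (q^2+k))^2"
        using h False by (intro power_mono) auto
      also have "\<dots> = q^2+k" using assms by simp
      finally show "(2*\<alpha>*\<phi> - q)^2 \<le> q^2 + k" .
    next
      assume "(2*\<alpha>*\<phi> - q)^2 \<le> q^2 + k"
      then show "2*\<alpha>*\<phi> - q \<le> sqrt (q^2+k)" by (rule real_le_rsqrt)
    qed
    also have "\<dots> \<longleftrightarrow> 4*\<alpha>*(\<alpha>*\<phi>^2 - q*\<phi> - k/(4*\<alpha>)) \<le> 0"
    proof -
      have "4*\<alpha>*(\<alpha>*\<phi>^2 - q*\<phi> - k/(4*\<alpha>)) = (2*\<alpha>*\<phi> - q)^2 - (q^2 + k)"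
      proof -
        have kk: "4*\<alpha>*(k/(4*\<alpha>)) = k" using assms by simp
        have "4*\<alpha>*(\<alpha>*\<phi>^2 - q*\<phi> - k/(4*\<alpha>)) = 4*\<alpha>*(\<alpha>*\<phi>^2 - q*\<phi>) - 4*\<alpha>*(k/(4*\<alpha>))"
          by (simp only: right_diff_distrib)
        also have "\<dots> = 4*\<alpha>*(\<alpha>*\<phi>^2 - q*\<phi>) - k" by (simp only: kk)
        also have "\<dots> = (2*\<alpha>*\<phi> - q)^2 - (q^2 + k)" by (simp add: algebra_simps power2_eq_square)
        finally show ?thesis .
      qed
      then show ?thesis by linarith
    qed
    also have "\<dots> \<longleftrightarrow> \<alpha>*\<phi>^2 - q*\<phi> - k/(4*\<alpha>) \<le> 0"
      using assms by (simp add: mult_le_0_iff)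
    finally show ?thesis .
  qed
  finally show ?thesis .
qed
theorem proposition2:
  fixes B1 B2 C1 C2 F1 F2 \<phi> \<alpha> r10 r20 x1 x2 :: real
  assumes pos: "B1 > 0" "B2 > 0" "C1 > 0" "C2 > 0" "F1 > 0" "F2 > 0" "\<phi> > 0"
    and CB: "C1 < B1" "C2 < B2"
    and alpha: "0 < \<alpha>" "\<alpha> \<le> 1"
    and r0: "r10 \<ge> 0" "r20 \<ge> 0" "r10 + r20 = 1"
    and A1: "\<phi> < F1 + F2"
    and A2: "F1 > (1 - \<alpha>) * \<phi> * r10" "F2 > (1 - \<alpha>) * \<phi> * r20"
    and A3: "\<phi> < (F1 / C1) * B1" "\<phi> < (F2 / C2) * B2"
    and dom: "0 \<le> x1" "x1 \<le> B1" "0 \<le> x2" "x2 \<le> B2"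
    and eq1: "min (\<phi> * R1 \<alpha> r10 B1 B2 x1 x2) (supply_fn B1 C1 F1 x1) - demand_fn B1 C1 F1 x1 = 0"
    and eq2: "min (\<phi> * R2 \<alpha> r20 B1 B2 x1 x2) (supply_fn B2 C2 F2 x2) - demand_fn B2 C2 F2 x2 = 0"
  shows
    "let E1 = (F1 / C1) * B1; E2 = (F2 / C2) * B2;
         q1 = \<alpha> * (F1 * (1 + E2 / E1) - E2) - 2 * (1 - \<alpha>) * r10 * E2;
         q2 = \<alpha> * (F2 * (1 + E1 / E2) - E1) - 2 * (1 - \<alpha>) * r20 * E1;
         k1 = 8 * \<alpha> * F1 * E2;
         k2 = 8 * \<alpha> * F2 * E1;
         Ft1 = eff_cap \<alpha> q1 k1;
         Ft2 = eff_cap \<alpha> q2 k2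
     in (\<phi> \<le> min Ft1 Ft2 \<longrightarrow>
           \<phi> * R1 \<alpha> r10 B1 B2 x1 x2 \<le> supply_fn B1 C1 F1 x1 \<and>
           \<phi> * R2 \<alpha> r20 B1 B2 x1 x2 \<le> supply_fn B2 C2 F2 x2)
      \<and> (\<phi> > min Ft1 Ft2 \<and> min Ft1 Ft2 = Ft1 \<longrightarrow>
           \<phi> * R1 \<alpha> r10 B1 B2 x1 x2 > supply_fn B1 C1 F1 x1)
      \<and> (\<phi> > min Ft1 Ft2 \<and> min Ft1 Ft2 = Ft2 \<longrightarrow>
           \<phi> * R2 \<alpha> r20 B1 B2 x1 x2 > supply_fn B2 C2 F2 x2)"
proof -
  define E1 where "E1 = (F1 / C1) * B1"
  define E2 where "E2 = (F2 / C2) * B2"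
  define q1 where "q1 = \<alpha> * (F1 * (1 + E2 / E1) - E2) - 2 * (1 - \<alpha>) * r10 * E2"
  define q2 where "q2 = \<alpha> * (F2 * (1 + E1 / E2) - E1) - 2 * (1 - \<alpha>) * r20 * E1"
  define Ft1 where "Ft1 = eff_cap \<alpha> q1 (8 * \<alpha> * F1 * E2)"
  define Ft2 where "Ft2 = eff_cap \<alpha> q2 (8 * \<alpha> * F2 * E1)"
  define r1 where "r1 = R1 \<alpha> r10 B1 B2 x1 x2"
  define r2 where "r2 = R2 \<alpha> r20 B1 B2 x1 x2"
  define P1 where "P1 = \<alpha> * \<phi>^2 - q1 * \<phi> - 2*F1*E2"
  define P2 where "P2 = \<alpha> * \<phi>^2 - q2 * \<phi> - 2*F2*E1"
  have E1p: "E1 > 0" and E2p: "E2 > 0" using pos by (simp_all add: E1_def E2_def)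
  have ar: "\<alpha>*r10 + \<alpha>*r20 = \<alpha>" by (metis distrib_left mult_1_right r0(3))
  have r12: "r1 + r2 = 1" unfolding r1_def r2_def R1_def R2_def using r0 ar
    by (simp add: algebra_simps)
  have c1: "supply_fn B1 C1 F1 x1 = F1 \<and> ((x1 < C1 \<and> \<phi>*r1 = F1/C1*x1 \<and> \<phi>*r1 < F1) \<or> (x1 = C1 \<and> \<phi>*r1 \<ge> F1 \<and> F1/C1*x1 = F1))"
    using eqcase[OF pos(3) CB(1) pos(5) eq1] unfolding r1_def by simp
  have c2: "supply_fn B2 C2 F2 x2 = F2 \<and> ((x2 < C2 \<and> \<phi>*r2 = F2/C2*x2 \<and> \<phi>*r2 < F2) \<or> (x2 = C2 \<and> \<phi>*r2 \<ge> F2 \<and> F2/C2*x2 = F2))"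
    using eqcase[OF pos(4) CB(2) pos(6) eq2] unfolding r2_def by simp
  have P1e: "P1 = 2*E2*(\<phi>*r1 - F1) + \<alpha>*\<phi>*(\<phi> - F1 - F2/C2*x2) + \<alpha>*\<phi>*(E2/E1)*(F1/C1*x1 - F1)"
  proof -
    have "P1 = 2*E2*(\<phi>*r1 - F1) + \<alpha>*\<phi>*(\<phi> - F1 - E2*(x2/B2)) + \<alpha>*\<phi>*(E2*(x1/B1) - F1*(E2/E1))"
      unfolding P1_def q1_def r1_def R1_def by (rule G0)
    moreover have "E2*(x2/B2) = F2/C2*x2" using pos by (simp add: E2_def)
    moreover have "E2*(x1/B1) - F1*(E2/E1) = (E2/E1)*(F1/C1*x1 - F1)"
      using pos by (simp add: E1_def E2_def field_simps)
    ultimately show ?thesis by (simp add: mult.assoc)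
  qed
  have P2e: "P2 = 2*E1*(\<phi>*r2 - F2) + \<alpha>*\<phi>*(\<phi> - F2 - F1/C1*x1) + \<alpha>*\<phi>*(E1/E2)*(F2/C2*x2 - F2)"
  proof -
    have "P2 = 2*E1*(\<phi>*r2 - F2) + \<alpha>*\<phi>*(\<phi> - F2 - E1*(x1/B1)) + \<alpha>*\<phi>*(E1*(x2/B2) - F2*(E1/E2))"
      unfolding P2_def q2_def r2_def R2_def by (rule G0)
    moreover have "E1*(x1/B1) = F1/C1*x1" using pos by (simp add: E1_def)
    moreover have "E1*(x2/B2) - F2*(E1/E2) = (E1/E2)*(F2/C2*x2 - F2)"
      using pos by (simp add: E1_def E2_def field_simps)
    ultimately show ?thesis by (simp add: mult.assoc)
  qed
  have s1: "\<phi> \<le> Ft1 \<longleftrightarrow> P1 \<le> 0"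
    unfolding Ft1_def P1_def using sign_lemma[of \<alpha> "8 * \<alpha> * F1 * E2" \<phi> q1] alpha pos E2p by (simp add: field_simps)
  have s2: "\<phi> \<le> Ft2 \<longleftrightarrow> P2 \<le> 0"
    unfolding Ft2_def P2_def using sign_lemma[of \<alpha> "8 * \<alpha> * F2 * E1" \<phi> q2] alpha pos E1p by (simp add: field_simps)
  have ap: "2*E1 > 0" "2*E2 > 0" "\<alpha>*\<phi> > 0" "\<alpha>*\<phi>*(E2/E1) > 0" "\<alpha>*\<phi>*(E1/E2) > 0"
    using E1p E2p alpha pos by simp_all
  have main: "(P1 \<le> 0 \<and> P2 \<le> 0 \<longrightarrow> \<phi>*r1 \<le> F1 \<and> \<phi>*r2 \<le> F2) \<and> (P1 > 0 \<longrightarrow> \<phi>*r1 > F1) \<and> (P2 > 0 \<longrightarrow> \<phi>*r2 > F2)"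
  proof -
    from c1 c2 consider
        (aa) "x1 < C1" "\<phi>*r1 = F1/C1*x1" "\<phi>*r1 < F1" "x2 < C2" "\<phi>*r2 = F2/C2*x2" "\<phi>*r2 < F2"
      | (ab) "x1 < C1" "\<phi>*r1 = F1/C1*x1" "\<phi>*r1 < F1" "\<phi>*r2 \<ge> F2" "F2/C2*x2 = F2"
      | (ba) "\<phi>*r1 \<ge> F1" "F1/C1*x1 = F1" "x2 < C2" "\<phi>*r2 = F2/C2*x2" "\<phi>*r2 < F2"
      | (bb) "\<phi>*r1 \<ge> F1" "\<phi>*r2 \<ge> F2" by blast
    then show ?thesis
    proof cases
      case aa
      have "\<phi> = \<phi>*r1 + \<phi>*r2" using r12 by (metis distrib_left mult.right_neutral)
      then have "P1 < 0" unfolding P1e using aa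
        by (intro neg3[OF ap(2) ap(3) ap(4)]) linarith+
      moreover have "P2 < 0" unfolding P2e using aa \<open>\<phi> = \<phi>*r1 + \<phi>*r2\<close>
        by (intro neg3[OF ap(1) ap(3) ap(5)]) linarith+
      ultimately show ?thesis using aa by simp
    next
      case ab
      have "\<phi> = \<phi>*r1 + \<phi>*r2" using r12 by (metis distrib_left mult.right_neutral)
      then have "P1 < 0" unfolding P1e using ab A1
        by (intro neg3[OF ap(2) ap(3) ap(4)]) linarith+
      moreover have "P2 = (2*E1 + \<alpha>*\<phi>)*(\<phi>*r2 - F2)"
      proof -
        have t1: "\<phi> - F2 - F1/C1*x1 = \<phi>*r2 - F2" using ab \<open>\<phi> = \<phi>*r1 + \<phi>*r2\<close> by linarith
        have t2: "F2/C2*x2 - F2 = 0" using ab by linarith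
        show ?thesis unfolding P2e t1 t2 by (simp add: algebra_simps)
      qed
      moreover have "2*E1 + \<alpha>*\<phi> > 0" using ap by simp
      ultimately show ?thesis using ab by (auto simp: zero_less_mult_iff mult_le_0_iff)
    next
      case ba
      have "\<phi> = \<phi>*r1 + \<phi>*r2" using r12 by (metis distrib_left mult.right_neutral)
      then have "P2 < 0" unfolding P2e using ba A1
        by (intro neg3[OF ap(1) ap(3) ap(5)]) linarith+
      moreover have "P1 = (2*E2 + \<alpha>*\<phi>)*(\<phi>*r1 - F1)"
      proof -
        have t1: "\<phi> - F1 - F2/C2*x2 = \<phi>*r1 - F1" using ba \<open>\<phi> = \<phi>*r1 + \<phi>*r2\<close> by linarith
        have t2: "F1/C1*x1 - F1 = 0" using ba by linarith
        show ?thesis unfolding P1e t1 t2 by (simp add: algebra_simps)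
      qed
      moreover have "2*E2 + \<alpha>*\<phi> > 0" using ap by simp
      ultimately show ?thesis using ba by (auto simp: zero_less_mult_iff mult_le_0_iff)
    next
      case bb
      have "\<phi> = \<phi>*r1 + \<phi>*r2" using r12 by (metis distrib_left mult.right_neutral)
      then show ?thesis using bb A1 by linarith
    qed
  qed
  have sp1: "supply_fn B1 C1 F1 x1 = F1" using c1 by blast
  have sp2: "supply_fn B2 C2 F2 x2 = F2" using c2 by blast
  have m0: "\<phi> \<le> min Ft1 Ft2 \<longleftrightarrow> P1 \<le> 0 \<and> P2 \<le> 0" using s1 s2 by simp
  have m1: "\<phi> > min Ft1 Ft2 \<and> min Ft1 Ft2 = Ft1 \<longrightarrow> P1 > 0" using s1 by linarith
  have m2: "\<phi> > min Ft1 Ft2 \<and> min Ft1 Ft2 = Ft2 \<longrightarrow> P2 > 0" using s2 by linarith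
  have fin: "(\<phi> \<le> min Ft1 Ft2 \<longrightarrow> \<phi>*r1 \<le> supply_fn B1 C1 F1 x1 \<and> \<phi>*r2 \<le> supply_fn B2 C2 F2 x2)
    \<and> (\<phi> > min Ft1 Ft2 \<and> min Ft1 Ft2 = Ft1 \<longrightarrow> \<phi>*r1 > supply_fn B1 C1 F1 x1)
    \<and> (\<phi> > min Ft1 Ft2 \<and> min Ft1 Ft2 = Ft2 \<longrightarrow> \<phi>*r2 > supply_fn B2 C2 F2 x2)"
    unfolding sp1 sp2 m0 using main m1 m2 by blast
  show ?thesis
    unfolding Let_def using fin unfolding Ft1_def Ft2_def q1_def q2_def r1_def r2_def E1_def E2_def .
qed

end
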